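(* Let $p>a\ge 1$ be integers and let $g_{i,j}\in\{1,-1\}$ for $i=1,\dots,a$ and $j=1,\dots,p-a$. Put $\eta_i'=\sigma_1^{g_{i,1}}\sigma_2^{g_{i,2}}\cdots\sigma_{p-a-1}^{g_{i,p-a-1}}$ and $\eta_i=\eta_i'\,\sigma_{p-a}^{g_{i,p-a}}$, and for $j\ge p-a$ put $\kappa_j=\sigma_{p-a+1}\sigma_{p-a+2}\cdots\sigma_j$ (so $\kappa_{p-a}$ is the empty word). Then the $p$-braid \[\prod_{k=1}^{a}\Big(\eta_k\,\kappa_{p-k}\,\sigma_{p-k+1}^{-1}\sigma_{p-k+2}^{-1}\cdots\sigma_{p-1}^{-1}\Big) =\eta_1\kappa_{p-1}\cdot\eta_2\kappa_{p-2}\sigma_{p-1}^{-1}\cdots\eta_{a-1}\kappa_{p-a+1}\sigma_{p-a+2}^{-1}\cdots\sigma_{p-1}^{-1}\cdot\eta_a\sigma_{p-a+1}^{-1}\cdots\sigma_{p-1}^{-1}\] is Markov equivalent to the braid $\eta_1'\eta_2'\cdots\eta_a'$.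
   Context: $\sigma_1,\sigma_2,\dots$ denote the standard Artin generators of the braid groups. Two braids (possibly with different numbers of strands) are Markov equivalent, written $\sim_M$, if their closures are isotopic links. *)

theory Defs
  imports Main
begin

text \<open>Braid words: a letter k > 0 stands for sigma_k, a letter -k (k > 0) for sigma_k^{-1}.
A word is a word on n strands if all letters satisfy 1 <= |x| <= n - 1.\<close>

definition valid_word :: "nat \<Rightarrow> int list \<Rightarrow> bool" where
  "valid_word n w \<longleftrightarrow> (\<forall>x\<in>set w. 1 \<le> \<bar>x\<bar> \<and> \<bar>x\<bar> \<le> int n - 1)"

inductive braid_step :: "nat \<Rightarrow> int list \<Rightarrow> int list \<Rightarrow> bool" for n where
  cancel: "valid_word n (u @ v) \<Longrightarrow> 1 \<le> \<bar>x\<bar> \<Longrightarrow> \<bar>x\<bar> \<le> int n - 1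
     \<Longrightarrow> braid_step n (u @ v) (u @ [x, -x] @ v)"
| far_comm: "valid_word n (u @ v) \<Longrightarrow> 1 \<le> i \<Longrightarrow> i \<le> int n - 1 \<Longrightarrow> 1 \<le> j \<Longrightarrow> j \<le> int n - 1
     \<Longrightarrow> \<bar>i - j\<bar> \<ge> 2 \<Longrightarrow> braid_step n (u @ [i, j] @ v) (u @ [j, i] @ v)"
| braid_rel: "valid_word n (u @ v) \<Longrightarrow> 1 \<le> i \<Longrightarrow> i + 1 \<le> int n - 1
     \<Longrightarrow> braid_step n (u @ [i, i + 1, i] @ v) (u @ [i + 1, i, i + 1] @ v)"

definition braid_eq :: "nat \<Rightarrow> int list \<Rightarrow> int list \<Rightarrow> bool" where
  "braid_eq n = (symclp (braid_step n))\<^sup>*\<^sup>*"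

inductive markov_step :: "nat \<times> int list \<Rightarrow> nat \<times> int list \<Rightarrow> bool" where
  braid: "braid_step n w w' \<Longrightarrow> markov_step (n, w) (n, w')"
| conj: "n \<ge> 1 \<Longrightarrow> valid_word n (u @ v) \<Longrightarrow> markov_step (n, u @ v) (n, v @ u)"
| stab_pos: "n \<ge> 1 \<Longrightarrow> valid_word n w \<Longrightarrow> markov_step (n, w) (Suc n, w @ [int n])"
| stab_neg: "n \<ge> 1 \<Longrightarrow> valid_word n w \<Longrightarrow> markov_step (n, w) (Suc n, w @ [- int n])"

text \<open>Markov equivalence (by Markov's theorem, equivalent to isotopy of closures).\<close>
definition markov_equiv :: "nat \<times> int list \<Rightarrow> nat \<times> int list \<Rightarrow> bool" where
  "markov_equiv = (symclp markov_step)\<^sup>*\<^sup>*"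

end

theory Submission
  imports Defs
begin

definition letter :: "nat \<Rightarrow> int \<Rightarrow> bool" where
  "letter N x \<longleftrightarrow> 1 \<le> \<bar>x\<bar> \<and> \<bar>x\<bar> \<le> int N - 1"

lemma letter_uminus[simp]: "letter N (- x) = letter N x"
  by (simp add: letter_def)

lemma valid_word_Nil[simp]: "valid_word N []" by (simp add: valid_word_def)
lemma valid_word_Cons[simp]: "valid_word N (x # w) \<longleftrightarrow> letter N x \<and> valid_word N w"
  by (auto simp: valid_word_def letter_def)
lemma valid_word_append[simp]: "valid_word N (u @ w) \<longleftrightarrow> valid_word N u \<and> valid_word N w"
  by (auto simp: valid_word_def)
lemma valid_word_concat: "valid_word N (concat ws) \<longleftrightarrow> (\<forall>w\<in>set ws. valid_word N w)"
  by (induct ws) auto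
lemma valid_word_mono: "valid_word N w \<Longrightarrow> N \<le> M \<Longrightarrow> valid_word M w"
  by (auto simp: valid_word_def)

lemma beq_refl[intro, simp]: "braid_eq N w w" by (simp add: braid_eq_def)
lemma beq_trans[trans]: "braid_eq N u v \<Longrightarrow> braid_eq N v w \<Longrightarrow> braid_eq N u w"
  unfolding braid_eq_def by (rule rtranclp_trans)
lemma beq_sym: "braid_eq N u v \<Longrightarrow> braid_eq N v u"
  unfolding braid_eq_def
  by (metis equivp_rtranclp_symclp equivp_symp)

lemma step_cong:
  assumes "braid_step N w w'" "valid_word N l" "valid_word N r"
  shows "braid_step N (l @ w @ r) (l @ w' @ r)"
  using assms(1)
proof cases
  case (cancel u v x)
  then show ?thesis using assms braid_step.cancel[of N "l@u" "v@r" x] by simp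
next
  case (far_comm u v i j)
  then show ?thesis using assms braid_step.far_comm[of N "l@u" "v@r" i j] by simp
next
  case (braid_rel u v i)
  then show ?thesis using assms braid_step.braid_rel[of N "l@u" "v@r" i] by simp
qed

lemma beq_cong:
  "braid_eq N w w' \<Longrightarrow> valid_word N l \<Longrightarrow> valid_word N r \<Longrightarrow> braid_eq N (l@w@r) (l@w'@r)"
  unfolding braid_eq_def
proof (induction rule: rtranclp_induct)
  case base show ?case by simp
next
  case (step y z)
  from step.hyps(2) have "symclp (braid_step N) (l@y@r) (l@z@r)"
    using step_cong step.prems by (auto simp: symclp_def)
  with step.IH[OF step.prems] show ?case by (rule rtranclp.rtrancl_into_rtrancl)
qed

lemma beq_cancel: "letter N x \<Longrightarrow> braid_eq N [x, -x] []"
proof -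
  assume "letter N x"
  then have "braid_step N ([] @ []) ([] @ [x, -x] @ [])"
    by (intro braid_step.cancel) (auto simp: letter_def)
  then have "braid_eq N [] [x, -x]" by (auto simp: braid_eq_def)
  then show ?thesis by (rule beq_sym)
qed

lemma inv_conj:
  assumes "letter N x" "letter N y" "valid_word N X" "braid_eq N (X@[x]) ([y]@X)"
  shows "braid_eq N (X@[-x]) ([-y]@X)"
proof -
  have c: "braid_eq N [-y, y] []" using beq_cancel[of N "-y"] assms by simp
  have "braid_eq N (X@[-x]) ([]@[-y,y]@(X@[-x]))"
    using beq_sym[OF beq_cong[OF c, of "[]" "X@[-x]"]] assms by simp
  also have "[]@[-y,y]@(X@[-x]) = [-y]@([y]@X)@[-x]" by simp
  also have "braid_eq N ... ([-y]@(X@[x])@[-x])"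
    using beq_cong[OF beq_sym[OF assms(4)], of "[-y]" "[-x]"] assms by simp
  also have "[-y]@(X@[x])@[-x] = ([-y]@X)@[x,-x]@[]" by simp
  also have "braid_eq N ... (([-y]@X)@[]@[])"
    using beq_cong[OF beq_cancel[of N x], of "[-y]@X" "[]"] assms by simp
  finally show ?thesis by simp
qed

definition far :: "int \<Rightarrow> int \<Rightarrow> bool" where
  "far x y \<longleftrightarrow> \<bar>x\<bar> + 2 \<le> \<bar>y\<bar> \<or> \<bar>y\<bar> + 2 \<le> \<bar>x\<bar>"

lemma comm_pos: "letter N i \<Longrightarrow> letter N j \<Longrightarrow> i > 0 \<Longrightarrow> j > 0 \<Longrightarrow> far i j
  \<Longrightarrow> braid_eq N [i,j] [j,i]"
  using braid_step.far_comm[of N "[]" "[]" i j]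
  by (auto simp: letter_def far_def braid_eq_def)

lemma comm_letters:
  assumes "letter N x" "letter N y" "far x y"
  shows "braid_eq N [x,y] [y,x]"
proof -
  have lp: "\<And>i j. letter N i \<Longrightarrow> letter N j \<Longrightarrow> i > 0 \<Longrightarrow> j > 0 \<Longrightarrow> far i j \<Longrightarrow>
     braid_eq N [i,j] [j,i] \<and> braid_eq N [i,-j] [-j,i] \<and> braid_eq N [-i,j] [j,-i]
     \<and> braid_eq N [-i,-j] [-j,-i]"
  proof -
    fix i j assume h: "letter N i" "letter N j" "i > (0::int)" "j > 0" "far i j"
    have a: "braid_eq N [i,j] [j,i]" using comm_pos h by blast
    have a': "braid_eq N [j,i] [i,j]" using comm_pos h by (auto simp: far_def)
    have b: "braid_eq N [i,-j] [-j,i]" using inv_conj[of N j j "[i]"] a h by simp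
    have c: "braid_eq N [j,-i] [-i,j]" using inv_conj[of N i i "[j]"] a' h by simp
    have d: "braid_eq N [-i,-j] [-j,-i]" using inv_conj[of N j j "[-i]"] beq_sym[OF c] h by simp
    show "?thesis i j" using a b beq_sym[OF c] d by simp
  qed
  have f: "letter N \<bar>x\<bar>" "letter N \<bar>y\<bar>" "\<bar>x\<bar> > 0" "\<bar>y\<bar> > 0" "far \<bar>x\<bar> \<bar>y\<bar>"
    using assms by (auto simp: far_def letter_def)
  show ?thesis
    using lp[OF f] by (cases "x \<ge> 0"; cases "y \<ge> 0") (auto simp: abs_if split: if_splits)
qed

lemma comm_letter_word:
  "letter N x \<Longrightarrow> valid_word N w \<Longrightarrow> \<forall>y\<in>set w. far x y \<Longrightarrow> braid_eq N ([x]@w) (w@[x])"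
proof (induction w)
  case Nil then show ?case by simp
next
  case (Cons y w)
  have "braid_eq N ([x]@(y#w)) ([]@[y,x]@w)"
    using beq_cong[OF comm_letters[of N x y], of "[]" w] Cons.prems by simp
  also have "[]@[y,x]@w = [y]@([x]@w)@[]" by simp
  also have "braid_eq N ... ([y]@(w@[x])@[])"
    using beq_cong[OF Cons.IH, of "[y]" "[]"] Cons.prems by simp
  finally show ?case by simp
qed

lemma comm_words:
  "valid_word N u \<Longrightarrow> valid_word N w \<Longrightarrow> \<forall>x\<in>set u. \<forall>y\<in>set w. far x y
   \<Longrightarrow> braid_eq N (u@w) (w@u)"
proof (induction u)
  case Nil then show ?case by simp
next
  case (Cons x u)
  have "braid_eq N ((x#u)@w) ([x]@(w@u)@[])"
    using beq_cong[OF Cons.IH, of "[x]" "[]"] Cons.prems by simp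
  also have "[x]@(w@u)@[] = []@([x]@w)@u" by simp
  also have "braid_eq N ... ([]@(w@[x])@u)"
    using beq_cong[OF comm_letter_word[of N x w], of "[]" u] Cons.prems by simp
  finally show ?case by simp
qed

lemma braid_pos: "1 \<le> i \<Longrightarrow> i + 1 \<le> int N - 1 \<Longrightarrow> braid_eq N [i, i+1, i] [i+1, i, i+1]"
  using braid_step.braid_rel[of N "[]" "[]" i] by (auto simp: braid_eq_def)

definition dsc :: "nat \<Rightarrow> nat \<Rightarrow> int list" where "dsc i j = rev (map int [i..<j])"
definition asc :: "nat \<Rightarrow> nat \<Rightarrow> int list" where "asc i j = map int [i..<j]"
definition ngs :: "nat \<Rightarrow> nat \<Rightarrow> int list" where "ngs i j = map (\<lambda>m. - int m) [i..<j]"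

lemma set_dsc[simp]: "set (dsc i j) = int ` {i..<j}" by (simp add: dsc_def)
lemma set_asc[simp]: "set (asc i j) = int ` {i..<j}" by (simp add: asc_def)
lemma set_ngs[simp]: "set (ngs i j) = (\<lambda>m. - int m) ` {i..<j}" by (simp add: ngs_def)

lemma dsc_empty[simp]: "j \<le> i \<Longrightarrow> dsc i j = []" by (simp add: dsc_def)
lemma ngs_empty[simp]: "j \<le> i \<Longrightarrow> ngs i j = []" by (simp add: ngs_def)
lemma asc_empty[simp]: "j \<le> i \<Longrightarrow> asc i j = []" by (simp add: asc_def)

lemma dsc_Suc: "i \<le> j \<Longrightarrow> dsc i (Suc j) = int j # dsc i j" by (simp add: dsc_def)
lemma ngs_Suc: "i \<le> j \<Longrightarrow> ngs i (Suc j) = ngs i j @ [- int j]" by (simp add: ngs_def)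
lemma asc_Suc: "i \<le> j \<Longrightarrow> asc i (Suc j) = asc i j @ [int j]" by (simp add: asc_def)
lemma dsc_low: "i < j \<Longrightarrow> dsc i j = dsc (Suc i) j @ [int i]"
  by (simp add: dsc_def upt_conv_Cons)

lemma valid_dsc: "1 \<le> i \<Longrightarrow> j \<le> N \<Longrightarrow> valid_word N (dsc i j)"
  by (auto simp: valid_word_def)
lemma valid_asc: "1 \<le> i \<Longrightarrow> j \<le> N \<Longrightarrow> valid_word N (asc i j)"
  by (auto simp: valid_word_def)
lemma valid_ngs: "1 \<le> i \<Longrightarrow> j \<le> N \<Longrightarrow> valid_word N (ngs i j)"
  by (auto simp: valid_word_def)

lemma ngs_dsc: "1 \<le> i \<Longrightarrow> j \<le> N \<Longrightarrow> braid_eq N (ngs i j @ dsc i j) []"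
proof (induction j)
  case 0 then show ?case by simp
next
  case (Suc j)
  show ?case
  proof (cases "i \<le> j")
    case True
    have l: "letter N (- int j)" using Suc.prems True by (simp add: letter_def)
    have "ngs i (Suc j) @ dsc i (Suc j) = ngs i j @ [- int j, - (- int j)] @ dsc i j"
      using True by (simp add: ngs_Suc dsc_Suc)
    also have "braid_eq N ... (ngs i j @ [] @ dsc i j)"
      by (rule beq_cong[OF beq_cancel[OF l]]) (use Suc.prems in \<open>auto intro: valid_ngs valid_dsc\<close>)
    also have "braid_eq N ... []" using Suc by simp
    finally show ?thesis .
  next
    case False then show ?thesis by simp
  qed
qed

lemma dsc_ngs: "1 \<le> i \<Longrightarrow> j \<le> N \<Longrightarrow> braid_eq N (dsc i j @ ngs i j) []"
proof (induction j)
  case 0 then show ?case by simp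
next
  case (Suc j)
  show ?case
  proof (cases "i \<le> j")
    case True
    have l: "letter N (int j)" using Suc.prems True by (simp add: letter_def)
    have "dsc i (Suc j) @ ngs i (Suc j) = [int j] @ (dsc i j @ ngs i j) @ [- int j]"
      using True by (simp add: ngs_Suc dsc_Suc)
    also have "braid_eq N ... ([int j] @ [] @ [- int j])"
      by (rule beq_cong) (use Suc l in auto)
    also have "braid_eq N ... []" using beq_cancel[OF l] by simp
    finally show ?thesis .
  next
    case False then show ?thesis by simp
  qed
qed

lemma P_rel:
  "1 \<le> i \<Longrightarrow> i \<le> t \<Longrightarrow> t < N \<Longrightarrow>
   braid_eq N (dsc i t @ dsc (Suc i) (Suc t) @ [int i]) ([int t] @ dsc i t @ dsc (Suc i) (Suc t))"
proof (induction "t - i" arbitrary: i)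
  case 0
  then have "i = t" by simp
  then show ?case by simp
next
  case (Suc d)
  then have it: "i < t" by simp
  have IH: "braid_eq N (dsc (Suc i) t @ dsc (Suc (Suc i)) (Suc t) @ [int (Suc i)])
      ([int t] @ dsc (Suc i) t @ dsc (Suc (Suc i)) (Suc t))"
    using Suc.hyps(1)[of "Suc i"] Suc.hyps(2) Suc.prems it by simp
  have v1: "valid_word N (dsc (Suc i) t)" "valid_word N (dsc (Suc (Suc i)) (Suc t))"
    using Suc.prems by (auto intro: valid_dsc)
  have li: "letter N (int i)" "letter N (int i + 1)" "letter N (int t)"
    using Suc.prems it by (auto simp: letter_def)
  have cw: "braid_eq N ([int i] @ dsc (Suc (Suc i)) (Suc t)) (dsc (Suc (Suc i)) (Suc t) @ [int i])"
    by (rule comm_letter_word) (use li v1 in \<open>auto simp: far_def\<close>)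
  have "dsc i t @ dsc (Suc i) (Suc t) @ [int i] =
     dsc (Suc i) t @ ([int i] @ dsc (Suc (Suc i)) (Suc t)) @ [int i + 1, int i]"
    using it by (simp add: dsc_low[of i t] dsc_low[of "Suc i" "Suc t"])
  also have "braid_eq N ... (dsc (Suc i) t @ (dsc (Suc (Suc i)) (Suc t) @ [int i]) @ [int i + 1, int i])"
    by (rule beq_cong[OF cw]) (use li v1 in auto)
  also have "... = (dsc (Suc i) t @ dsc (Suc (Suc i)) (Suc t)) @ [int i, int i + 1, int i] @ []" by simp
  also have "braid_eq N ... ((dsc (Suc i) t @ dsc (Suc (Suc i)) (Suc t)) @ [int i + 1, int i, int i + 1] @ [])"
    by (rule beq_cong[OF braid_pos]) (use Suc.prems it v1 in auto)
  also have "... = [] @ (dsc (Suc i) t @ dsc (Suc (Suc i)) (Suc t) @ [int (Suc i)]) @ [int i, int i + 1]" by simp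
  also have "braid_eq N ... ([] @ ([int t] @ dsc (Suc i) t @ dsc (Suc (Suc i)) (Suc t)) @ [int i, int i + 1])"
    by (rule beq_cong[OF IH]) (use li in auto)
  also have "... = ([int t] @ dsc (Suc i) t) @ (dsc (Suc (Suc i)) (Suc t) @ [int i]) @ [int i + 1]" by simp
  also have "braid_eq N ... (([int t] @ dsc (Suc i) t) @ ([int i] @ dsc (Suc (Suc i)) (Suc t)) @ [int i + 1])"
    by (rule beq_cong[OF beq_sym[OF cw]]) (use li v1 in auto)
  also have "... = [int t] @ dsc i t @ dsc (Suc i) (Suc t)"
    using it by (simp add: dsc_low[of i t] dsc_low[of "Suc i" "Suc t"])
  finally show ?case .
qed

lemma CL:
  assumes "1 \<le> i" "i \<le> t" "t < N" "s = 1 \<or> s = -1"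
  shows "braid_eq N (dsc (Suc i) (Suc t) @ [s * int i] @ ngs (Suc i) (Suc t))
                    (ngs i t @ [s * int t] @ dsc i t)"
proof -
  define X where "X = dsc i t @ dsc (Suc i) (Suc t)"
  have vX: "valid_word N X" using assms by (auto simp: X_def intro: valid_dsc)
  have li: "letter N (int i)" "letter N (int t)" using assms by (auto simp: letter_def)
  have P: "braid_eq N (X @ [int i]) ([int t] @ X)" using P_rel[OF assms(1-3)] by (simp add: X_def)
  have hX: "braid_eq N (X @ [s * int i]) ([s * int t] @ X)"
    using assms(4) P inv_conj[OF li vX P] by auto
  have vn: "valid_word N (ngs i t)" "valid_word N (ngs (Suc i) (Suc t))" "valid_word N (dsc i t)"
    using assms by (auto intro: valid_ngs valid_dsc)
  have ls: "letter N (s * int i)" "letter N (s * int t)" using assms li by auto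
  have "dsc (Suc i) (Suc t) @ [s * int i] @ ngs (Suc i) (Suc t) =
        [] @ [] @ (dsc (Suc i) (Suc t) @ [s * int i] @ ngs (Suc i) (Suc t))" by simp
  also have "braid_eq N ... ([] @ (ngs i t @ dsc i t) @ (dsc (Suc i) (Suc t) @ [s * int i] @ ngs (Suc i) (Suc t)))"
    by (rule beq_cong[OF beq_sym[OF ngs_dsc]]) (use assms vX vn ls in \<open>auto simp: X_def\<close>)
  also have "... = ngs i t @ (X @ [s * int i]) @ ngs (Suc i) (Suc t)" by (simp add: X_def)
  also have "braid_eq N ... (ngs i t @ ([s * int t] @ X) @ ngs (Suc i) (Suc t))"
    by (rule beq_cong[OF hX]) (use vn in auto)
  also have "... = (ngs i t @ [s * int t] @ dsc i t) @ (dsc (Suc i) (Suc t) @ ngs (Suc i) (Suc t)) @ []"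
    by (simp add: X_def)
  also have "braid_eq N ... ((ngs i t @ [s * int t] @ dsc i t) @ [] @ [])"
    by (rule beq_cong[OF dsc_ngs]) (use assms vn ls in auto)
  finally show ?thesis by simp
qed

definition A :: "(nat \<Rightarrow> int list) \<Rightarrow> (nat \<Rightarrow> int) \<Rightarrow> nat \<Rightarrow> nat \<Rightarrow> nat \<Rightarrow> int list" where
  "A E g n q k = E k @ [g k * int n] @ asc (n+1) (q-k+1) @ ngs (q-k+1) q"

lemma valid_A:
  assumes "1 \<le> n" "1 \<le> k" "n + k \<le> q" "valid_word n (E k)" "g k = 1 \<or> g k = -1" "q \<le> N"
  shows "valid_word N (A E g n q k)"
proof -
  have "valid_word N (E k)" using valid_word_mono assms by fastforce
  moreover have "letter N (g k * int n)" using assms by (auto simp: letter_def)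
  moreover have "valid_word N (asc (n+1) (q-k+1))" using assms by (intro valid_asc) auto
  moreover have "valid_word N (ngs (q-k+1) q)" using assms by (intro valid_ngs) auto
  ultimately show ?thesis by (simp add: A_def)
qed

lemma valid_pre:
  assumes "1 \<le> n" "m + n \<le> q" "\<forall>k\<in>{1..m}. valid_word n (E k) \<and> (g k = 1 \<or> g k = -1)" "q \<le> N"
  shows "valid_word N (concat (map (A E g n q) [1..<m+1]))"
  unfolding valid_word_concat using assms by (auto intro!: valid_A)

lemma L1:
  assumes "1 \<le> n" "m + n + 1 \<le> p" "\<forall>k\<in>{1..m}. valid_word n (E k) \<and> (g k = 1 \<or> g k = -1)"
  shows "braid_eq p (concat (map (A E g n p) [1..<m+1]))
           (concat (map (A E g n (p-1)) [1..<m+1]) @ dsc (p-m) p)"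
  using assms
proof (induction m)
  case 0 then show ?case by simp
next
  case (Suc m)
  define i where "i = p - Suc m"
  have ni: "n + 1 \<le> i" "i < p" using Suc.prems by (auto simp: i_def)
  have Ek: "valid_word n (E (Suc m))" "g (Suc m) = 1 \<or> g (Suc m) = -1" using Suc.prems by auto
  have IH: "braid_eq p (concat (map (A E g n p) [1..<m+1]))
           (concat (map (A E g n (p-1)) [1..<m+1]) @ dsc (p-m) p)"
    using Suc by auto
  define Pre' where "Pre' = concat (map (A E g n (p-1)) [1..<m+1])"
  define B where "B = E (Suc m) @ [g (Suc m) * int n] @ asc (n+1) i"
  have vP: "valid_word p Pre'" unfolding Pre'_def
    by (rule valid_pre) (use Suc.prems in auto)
  have vE: "valid_word p (E (Suc m))" using Ek valid_word_mono ni by fastforce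
  have lgn: "letter p (g (Suc m) * int n)"
    using Ek(2) proof
    assume "g (Suc m) = 1" then show ?thesis using ni Suc.prems by (simp add: letter_def)
  next
    assume "g (Suc m) = -1" then show ?thesis using ni Suc.prems by (simp add: letter_def)
  qed
  have vB: "valid_word p B" unfolding B_def using vE ni lgn Suc.prems
    by (auto intro!: valid_asc)
  have vd: "valid_word p (dsc (Suc i) p)" "valid_word p (ngs (Suc i) p)"
    "valid_word p (ngs i (p-1))" "valid_word p (dsc i (p-1))"
    using ni by (auto intro: valid_dsc valid_ngs)
  have Ap: "A E g n p (Suc m) = B @ [int i] @ ngs (Suc i) p"
  proof -
    have e: "p - Suc m + 1 = Suc i" using ni by (simp add: i_def)
    have "asc (n+1) (Suc i) = asc (n+1) i @ [int i]" using ni by (intro asc_Suc) simp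
    then show ?thesis unfolding A_def e by (simp add: B_def)
  qed
  have Ap1: "A E g n (p-1) (Suc m) = B @ ngs i (p-1)"
  proof -
    have e: "p - 1 - Suc m + 1 = i" using ni by (simp add: i_def)
    show ?thesis unfolding A_def e by (simp add: B_def)
  qed
  have li: "letter p (int i)" using ni Suc.prems by (simp add: letter_def)
  have dm: "p - m = Suc i" using ni by (simp add: i_def)
  have dp: "dsc i p = [int (p-1)] @ dsc i (p-1)"
    using ni dsc_Suc[of i "p-1"] by simp
  have far: "\<forall>x\<in>set (dsc (Suc i) p). \<forall>y\<in>set B. far x y"
  proof (intro ballI)
    fix x y assume x: "x \<in> set (dsc (Suc i) p)" and y: "y \<in> set B"
    have "\<bar>x\<bar> \<ge> int i + 1" using x by auto
    moreover have "\<bar>y\<bar> \<le> int i - 1"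
    proof -
      have "y \<in> set (E (Suc m)) \<or> y = g (Suc m) * int n \<or> y \<in> set (asc (n+1) i)"
        using y by (auto simp: B_def)
      then show ?thesis
      proof (elim disjE)
        assume "y \<in> set (E (Suc m))" then show ?thesis
          using Ek(1) ni by (auto simp: valid_word_def)
      next
        assume "y = g (Suc m) * int n" then show ?thesis using Ek(2) ni by auto
      next
        assume "y \<in> set (asc (n+1) i)" then show ?thesis by auto
      qed
    qed
    ultimately show "far x y" by (auto simp: far_def)
  qed
  have "concat (map (A E g n p) [1..<Suc m+1]) = [] @ concat (map (A E g n p) [1..<m+1]) @ A E g n p (Suc m)"
    by simp
  also have "braid_eq p ... ([] @ (Pre' @ dsc (Suc i) p) @ A E g n p (Suc m))"
    unfolding Pre'_def dm[symmetric] by (rule beq_cong[OF IH]) (use vB vd li in \<open>auto simp: Ap\<close>)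
  also have "... = Pre' @ (dsc (Suc i) p @ B) @ ([int i] @ ngs (Suc i) p)" by (simp add: Ap)
  also have "braid_eq p ... (Pre' @ (B @ dsc (Suc i) p) @ ([int i] @ ngs (Suc i) p))"
    by (rule beq_cong[OF comm_words]) (use vB vd vP far ni in \<open>auto simp: letter_def\<close>)
  also have "... = (Pre' @ B) @ (dsc (Suc i) (Suc (p-1)) @ [1 * int i] @ ngs (Suc i) (Suc (p-1))) @ []"
    using ni by simp
  also have "braid_eq p ... ((Pre' @ B) @ (ngs i (p-1) @ [1 * int (p-1)] @ dsc i (p-1)) @ [])"
    by (rule beq_cong[OF CL]) (use ni vP vB in auto)
  also have "... = concat (map (A E g n (p-1)) [1..<Suc m+1]) @ dsc (p - Suc m) p"
    using Ap1[symmetric] dp by (simp add: Pre'_def i_def[symmetric])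
  finally show ?case .
qed

lemma me_refl[simp]: "markov_equiv x x" by (simp add: markov_equiv_def)
lemma me_trans[trans]: "markov_equiv x y \<Longrightarrow> markov_equiv y z \<Longrightarrow> markov_equiv x z"
  unfolding markov_equiv_def by (rule rtranclp_trans)
lemma me_sym: "markov_equiv x y \<Longrightarrow> markov_equiv y x"
  unfolding markov_equiv_def by (metis equivp_rtranclp_symclp equivp_symp)
lemma me_step: "markov_step x y \<Longrightarrow> markov_equiv x y"
  unfolding markov_equiv_def by (simp add: r_into_rtranclp symclpI1)

lemma beq_me: "braid_eq N u v \<Longrightarrow> markov_equiv (N, u) (N, v)"
  unfolding braid_eq_def
proof (induction rule: rtranclp_induct)
  case base then show ?case by simp
next
  case (step y z)
  have "markov_equiv (N, y) (N, z)"
    using step.hyps(2) by (auto simp: symclp_def intro: me_step me_sym markov_step.braid)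
  then show ?case using step.IH me_trans by blast
qed

lemma me_conj: "N \<ge> 1 \<Longrightarrow> valid_word N (u @ v) \<Longrightarrow> markov_equiv (N, u @ v) (N, v @ u)"
  by (rule me_step, rule markov_step.conj)

lemma me_destab: "N \<ge> 1 \<Longrightarrow> valid_word N w \<Longrightarrow> x = int N \<or> x = - int N
   \<Longrightarrow> markov_equiv (Suc N, w @ [x]) (N, w)"
  by (rule me_sym, rule me_step) (auto intro: markov_step.stab_pos markov_step.stab_neg)

lemma G:
  assumes "1 \<le> n" "\<forall>k\<in>{1..a}. valid_word n (E k) \<and> (g k = 1 \<or> g k = -1)" "valid_word n T"
  shows "markov_equiv (n + a, concat (map (A E g n (n + a)) [1..<a+1]) @ T)
                      (n, concat (map E [1..<a+1]) @ T)"
  using assms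
proof (induction a arbitrary: T)
  case 0 then show ?case by simp
next
  case (Suc a)
  define p where "p = n + Suc a"
  have p1: "p - 1 = n + a" "p = Suc (n + a)" by (simp_all add: p_def)
  define Ea where "Ea = E (Suc a)"
  define ga where "ga = g (Suc a)"
  have Ek: "valid_word n Ea" "ga = 1 \<or> ga = -1" using Suc.prems by (auto simp: Ea_def ga_def)
  define Pre' where "Pre' = concat (map (A E g n (p-1)) [1..<a+1])"
  have L: "braid_eq p (concat (map (A E g n p) [1..<a+1])) (Pre' @ dsc (n+1) p)"
    using L1[of n a p E g] Suc.prems by (simp add: Pre'_def p_def)
  have vP: "valid_word (p-1) Pre'" unfolding Pre'_def
    by (rule valid_pre) (use Suc.prems p1 in auto)
  have vP': "valid_word p Pre'" using vP valid_word_mono by fastforce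
  have vEp: "valid_word p Ea" "valid_word (p-1) Ea" using Ek valid_word_mono p1 by fastforce+
  have vT: "valid_word p T" "valid_word (p-1) T" using Suc.prems valid_word_mono p1 by fastforce+
  have vd: "valid_word p (dsc (n+1) p)" "valid_word p (ngs (n+1) p)"
    "valid_word (p-1) (ngs n (p-1))" "valid_word (p-1) (dsc n (p-1))"
    using Suc.prems by (auto intro: valid_dsc valid_ngs)
  have vd': "valid_word p (ngs n (p-1))" "valid_word p (dsc n (p-1))"
    using vd(3,4) valid_word_mono by fastforce+
  have lg: "letter p (ga * int n)" "letter p (ga * int (p-1))"
    using Ek Suc.prems p1 by (auto simp: letter_def)
  have Aa: "A E g n p (Suc a) = Ea @ [ga * int n] @ ngs (n+1) p"
    by (simp add: A_def Ea_def ga_def p_def)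
  have far: "\<forall>x\<in>set (dsc (n+1) p). \<forall>y\<in>set Ea. far x y"
    using Ek(1) by (auto simp: far_def valid_word_def)
  have "braid_eq p (concat (map (A E g n p) [1..<Suc a+1]) @ T)
     ([] @ concat (map (A E g n p) [1..<a+1]) @ (A E g n p (Suc a) @ T))" by simp
  also have "braid_eq p ... ([] @ (Pre' @ dsc (n+1) p) @ (A E g n p (Suc a) @ T))"
    by (rule beq_cong[OF L]) (use vEp vd vT lg in \<open>auto simp: Aa\<close>)
  also have "... = Pre' @ (dsc (n+1) p @ Ea) @ ([ga * int n] @ ngs (n+1) p @ T)" by (simp add: Aa)
  also have "braid_eq p ... (Pre' @ (Ea @ dsc (n+1) p) @ ([ga * int n] @ ngs (n+1) p @ T))"
    by (rule beq_cong[OF comm_words]) (use vEp vd vT lg vP' far in auto)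
  also have "... = (Pre' @ Ea) @ (dsc (Suc n) (Suc (p-1)) @ [ga * int n] @ ngs (Suc n) (Suc (p-1))) @ T"
    using p1 by simp
  also have "braid_eq p ... ((Pre' @ Ea) @ (ngs n (p-1) @ [ga * int (p-1)] @ dsc n (p-1)) @ T)"
    by (rule beq_cong[OF CL]) (use Suc.prems Ek vP' vEp vT p1 in auto)
  finally have b1: "braid_eq p (concat (map (A E g n p) [1..<Suc a+1]) @ T)
     ((Pre' @ Ea @ ngs n (p-1) @ [ga * int (p-1)]) @ (dsc n (p-1) @ T))" by simp
  define W where "W = dsc n (p-1) @ T @ Pre' @ Ea @ ngs n (p-1)"
  have vW: "valid_word (p-1) W" using vd vT vP vEp by (simp add: W_def)
  have "markov_equiv (p, concat (map (A E g n p) [1..<Suc a+1]) @ T)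
      (p, (Pre' @ Ea @ ngs n (p-1) @ [ga * int (p-1)]) @ (dsc n (p-1) @ T))"
    by (rule beq_me[OF b1])
  also have "markov_equiv ... (p, (dsc n (p-1) @ T) @ (Pre' @ Ea @ ngs n (p-1) @ [ga * int (p-1)]))"
    by (rule me_conj) (use p1 vd' vT vP' vEp lg in auto)
  also have "... = (Suc (p-1), W @ [ga * int (p-1)])" using p1 by (simp add: W_def)
  also have "markov_equiv ... (p-1, W)"
    by (rule me_destab) (use p1 vW Ek Suc.prems in auto)
  also have "W = (dsc n (p-1)) @ (T @ Pre' @ Ea @ ngs n (p-1))" by (simp add: W_def)
  also have "markov_equiv (p-1, ...) (p-1, (T @ Pre' @ Ea @ ngs n (p-1)) @ dsc n (p-1))"
    by (rule me_conj) (use p1 vW Suc.prems in \<open>auto simp: W_def\<close>)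
  also have "markov_equiv ... (p-1, (Pre' @ Ea @ ngs n (p-1) @ dsc n (p-1) @ T))"
  proof -
    have "(T @ Pre' @ Ea @ ngs n (p-1)) @ dsc n (p-1) = T @ (Pre' @ Ea @ ngs n (p-1) @ dsc n (p-1))"
      by simp
    also have "markov_equiv (p-1, ...) (p-1, (Pre' @ Ea @ ngs n (p-1) @ dsc n (p-1)) @ T)"
      by (rule me_conj) (use p1 vW Suc.prems in \<open>auto simp: W_def\<close>)
    finally show ?thesis by simp
  qed
  also have "markov_equiv ... (p-1, (Pre' @ Ea) @ [] @ T)"
  proof -
    have "braid_eq (p-1) ((Pre' @ Ea) @ (ngs n (p-1) @ dsc n (p-1)) @ T) ((Pre' @ Ea) @ [] @ T)"
      by (rule beq_cong[OF ngs_dsc]) (use Suc.prems vP vEp vT in auto)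
    then show ?thesis by (intro beq_me) simp
  qed
  also have "... = (n + a, concat (map (A E g n (n + a)) [1..<a+1]) @ (Ea @ T))"
    using p1 by (simp add: Pre'_def)
  also have "markov_equiv ... (n, concat (map E [1..<a+1]) @ (Ea @ T))"
    by (rule Suc.IH) (use Suc.prems Ek in auto)
  also have "... = (n, concat (map E [1..<Suc a+1]) @ T)" by (simp add: Ea_def)
  finally show ?case by (simp add: p_def)
qed

theorem lemma3p1:
  fixes p a :: nat and g :: "nat \<Rightarrow> nat \<Rightarrow> int"
  assumes "1 \<le> a" and "a < p"
    and "\<forall>i\<in>{1..a}. \<forall>j\<in>{1..p - a}. g i j = 1 \<or> g i j = -1"
  shows "let eta' = (\<lambda>i. map (\<lambda>j. g i j * int j) [1..<p - a]);
             eta = (\<lambda>i. eta' i @ [g i (p - a) * int (p - a)]);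
             kappa = (\<lambda>j. map int [p - a + 1..<j + 1]);
             tl_inv = (\<lambda>k. map (\<lambda>m. - int m) [p - k + 1..<p])
         in markov_equiv
              (p, concat (map (\<lambda>k. eta k @ kappa (p - k) @ tl_inv k) [1..<a + 1]))
              (p - a, concat (map eta' [1..<a + 1]))"
proof -
  define n where "n = p - a"
  define E where "E = (\<lambda>i. map (\<lambda>j. g i j * int j) [1..<n])"
  define g' where "g' = (\<lambda>k. g k n)"
  have n1: "1 \<le> n" "n + a = p" using assms by (auto simp: n_def)
  have hyp: "\<forall>k\<in>{1..a}. valid_word n (E k) \<and> (g' k = 1 \<or> g' k = -1)"
  proof
    fix k assume k: "k \<in> {1..a}"
    have "valid_word n (E k)"
      unfolding valid_word_def E_def
    proof
      fix x assume "x \<in> set (map (\<lambda>j. g k j * int j) [1..<n])"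
      then obtain j where j: "j \<in> {1..<n}" "x = g k j * int j" by auto
      then have "g k j = 1 \<or> g k j = -1" using assms(3) k by (auto simp: n_def)
      then show "1 \<le> \<bar>x\<bar> \<and> \<bar>x\<bar> \<le> int n - 1" using j by auto
    qed
    moreover have "g' k = 1 \<or> g' k = -1" using assms(3) k n1 by (auto simp: g'_def n_def)
    ultimately show "valid_word n (E k) \<and> (g' k = 1 \<or> g' k = -1)" by simp
  qed
  have main: "markov_equiv (n + a, concat (map (A E g' n (n + a)) [1..<a+1]) @ [])
                      (n, concat (map E [1..<a+1]) @ [])"
    by (rule G) (use n1 hyp in auto)
  have eq: "map (A E g' n p) [1..<a+1] =
     map (\<lambda>k. (E k @ [g k (p - a) * int (p - a)]) @ map int [p - a + 1..<p - k + 1]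
              @ map (\<lambda>m. - int m) [p - k + 1..<p]) [1..<a + 1]"
    by (simp add: A_def asc_def ngs_def g'_def n_def)
  have main': "markov_equiv (p, concat (map (A E g' n p) [1..<a+1])) (p - a, concat (map E [1..<a+1]))"
    using main unfolding n1(2) append_Nil2 by (simp only: n_def)
  have goal: "markov_equiv
     (p, concat (map (\<lambda>k. (map (\<lambda>j. g k j * int j) [1..<p - a] @ [g k (p - a) * int (p - a)])
              @ map int [p - a + 1..<p - k + 1] @ map (\<lambda>m. - int m) [p - k + 1..<p]) [1..<a + 1]))
     (p - a, concat (map (\<lambda>i. map (\<lambda>j. g i j * int j) [1..<p - a]) [1..<a + 1]))"
    using main' unfolding eq unfolding E_def n_def .
  show ?thesis unfolding Let_def by (rule goal)
qed

end
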